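(* Let $f(x)$ be a real polynomial of degree $K > 1$ with positive leading coefficient, such that all roots of $f'(x)$ are real. Let $k$ be the number of distinct roots of $f'(x)$ that are not inflection points of $f(x)$, and if $k > 0$ sort them as $\alpha_k < \cdots < \alpha_1$; set $\alpha_0 = +\infty$, $f(\alpha_0) = 1$, $\alpha_{k+1} = -\infty$, $f(\alpha_{k+1}) = (-1)^K$. Say that SIGN holds if $f(\alpha_i)f(\alpha_{i-1}) \leq 0$ for all $i = 1,\ldots,k+1$, and that MULT holds if every root $\beta$ of $f'(x)$ with $\mathrm{ord}_\beta(f'(x)) > 1$ is also a root of $f(x)$. Then: (a) $f(x)$ has only real roots if and only if SIGN and MULT hold; (b) all complex roots of $f(x)$ are real and non-negative if and only if SIGN and MULT hold, all roots of $f'(x)$ are non-negative and $(-1)^Kf(0) \geq 0$; (c) all complex roots of $f(x)$ are real and positive if and only if SIGN and MULT hold, all roots of $f'(x)$ are positive and $(-1)^Kf(0) > 0$.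
   Context: $\mathrm{ord}_\beta(g(x))$ denotes the order of vanishing of the polynomial $g$ at $\beta$. *)

theory Defs
  imports "HOL-Computational_Algebra.Polynomial" Complex_Main
begin

definition inflection_point :: "real poly \<Rightarrow> real \<Rightarrow> bool" where
  "inflection_point f x \<longleftrightarrow>
     (\<exists>e>0. ((\<forall>t\<in>{x-e<..<x}. poly (pderiv (pderiv f)) t > 0) \<and>
              (\<forall>t\<in>{x<..<x+e}. poly (pderiv (pderiv f)) t < 0)) \<or>
             ((\<forall>t\<in>{x-e<..<x}. poly (pderiv (pderiv f)) t < 0) \<and>
              (\<forall>t\<in>{x<..<x+e}. poly (pderiv (pderiv f)) t > 0)))"

definition crit_noninfl :: "real poly \<Rightarrow> real set" where
  "crit_noninfl f = {x. poly (pderiv f) x = 0 \<and> \<not> inflection_point f x}"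

text \<open>alpha f i for i = 1..k is the i-th largest element of crit_noninfl f
  (so alpha_k < ... < alpha_1).\<close>
definition alpha :: "real poly \<Rightarrow> nat \<Rightarrow> real" where
  "alpha f i = rev (sorted_list_of_set (crit_noninfl f)) ! (i - 1)"

definition fval :: "real poly \<Rightarrow> nat \<Rightarrow> real" where
  "fval f i = (if i = 0 then 1
               else if i = card (crit_noninfl f) + 1 then (-1) ^ degree f
               else poly f (alpha f i))"

definition SIGN :: "real poly \<Rightarrow> bool" where
  "SIGN f \<longleftrightarrow> (\<forall>i\<in>{1..card (crit_noninfl f) + 1}. fval f i * fval f (i - 1) \<le> 0)"

definition MULT :: "real poly \<Rightarrow> bool" where
  "MULT f \<longleftrightarrow> (\<forall>\<beta>::real. poly (pderiv f) \<beta> = 0 \<and> order \<beta> (pderiv f) > 1 \<longrightarrow> poly f \<beta> = 0)"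

end

theory Submission imports Defs "HOL-Computational_Algebra.Fundamental_Theorem_Algebra" begin

lemma mapc_add: "map_poly (of_real::real\<Rightarrow>complex) (p + q) = map_poly of_real p + map_poly of_real q"
  by (intro poly_eqI) (simp add: coeff_map_poly)

lemma mapc_mult: "map_poly (of_real::real\<Rightarrow>complex) (p * q) = map_poly of_real p * map_poly of_real q"
  by (induct p) (auto simp: map_poly_pCons map_poly_smult mapc_add)

lemma mapc_poly: "poly (map_poly (of_real::real\<Rightarrow>complex) p) (of_real x) = of_real (poly p x)"
  by (induction p) (auto simp: map_poly_pCons)

lemma mapc_lin: "map_poly (of_real::real\<Rightarrow>complex) [:-a,1:] = [:-of_real a, 1:]"
  by (simp add: map_poly_pCons)

lemma fta: "degree (p::complex poly) > 0 \<Longrightarrow> \<exists>z. poly p z = 0"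
  by (rule fundamental_theorem_of_algebra_alt) auto

definition rr :: "real poly \<Rightarrow> bool" where
  "rr p \<longleftrightarrow> (\<forall>z::complex. poly (map_poly of_real p) z = 0 \<longrightarrow> z \<in> \<real>)"

lemma order_lin: "order x [:-a,1:] = (if x = a then 1 else (0::nat))" for a x :: real
proof (cases "x = a")
  case True then show ?thesis using order_power_n_n[of a 1] by simp
next
  case False then show ?thesis by (simp add: order_0I)
qed

lemma count_main:
  fixes p :: "real poly"
  assumes "p \<noteq> 0"
  shows "(\<Sum>x\<in>{x. poly p x = 0}. order x p) \<le> degree p \<and>
         ((\<Sum>x\<in>{x. poly p x = 0}. order x p) = degree p \<longleftrightarrow> rr p)"
  using assms
proof (induct "degree p" arbitrary: p rule: less_induct)
  case less
  show ?case
  proof (cases "{x. poly p x = 0} = {}")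
    case True
    have "rr p \<longleftrightarrow> degree p = 0"
    proof
      assume "rr p"
      show "degree p = 0"
      proof (rule ccontr)
        assume "degree p \<noteq> 0"
        then have "degree (map_poly (of_real::real\<Rightarrow>complex) p) > 0"
          by (simp add: degree_map_poly)
        then obtain z where z: "poly (map_poly (of_real::real\<Rightarrow>complex) p) z = 0" using fta by blast
        with \<open>rr p\<close> have "z \<in> \<real>" unfolding rr_def by blast
        then obtain x where "z = of_real x" by (auto elim: Reals_cases)
        with z have "poly p x = 0" by (simp add: mapc_poly)
        with True show False by blast
      qed
    next
      assume "degree p = 0"
      then obtain c where c: "p = [:c:]" by (metis degree_eq_zeroE)
      with less.prems have "c \<noteq> 0" by simp
      then show "rr p" unfolding rr_def c by (simp add: map_poly_pCons)
    qed
    then show ?thesis using True by simp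
  next
    case False
    then obtain a where a: "poly p a = 0" by blast
    then obtain q where pq: "p = [:-a,1:] * q" using poly_eq_0_iff_dvd by blast
    with less.prems have q0: "q \<noteq> 0" by auto
    have dq: "degree p = Suc (degree q)" using pq q0 by (metis degree_mult_eq degree_linear_power plus_1_eq_Suc power_one_right pCons_eq_0_iff zero_neq_one)
    have IH: "(\<Sum>x\<in>{x. poly q x = 0}. order x q) \<le> degree q \<and>
         ((\<Sum>x\<in>{x. poly q x = 0}. order x q) = degree q \<longleftrightarrow> rr q)"
      using less.hyps[of q] dq q0 by simp
    have Rp: "{x. poly p x = 0} = insert a {x. poly q x = 0}" using pq by auto
    have fin: "finite {x. poly q x = 0}" using q0 poly_roots_finite by blast
    have ordp: "order x p = (if x = a then 1 else 0) + order x q" for x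
    proof -
      have "order x p = order x [:-a,1:] + order x q"
        unfolding pq by (rule order_mult) (use pq less.prems in simp)
      then show ?thesis by (simp only: order_lin)
    qed
    have "(\<Sum>x\<in>{x. poly p x = 0}. order x p) = (\<Sum>x\<in>{x. poly p x = 0}. (if x = a then 1 else 0)) + (\<Sum>x\<in>{x. poly p x = 0}. order x q)"
      by (simp add: ordp sum.distrib)
    also have "(\<Sum>x\<in>{x. poly p x = 0}. (if x = a then 1 else (0::nat))) = 1"
      using Rp fin by (simp add: sum.delta)
    also have "(\<Sum>x\<in>{x. poly p x = 0}. order x q) = (\<Sum>x\<in>{x. poly q x = 0}. order x q)"
      using Rp fin by (intro sum.mono_neutral_right) (auto simp: order_root)
    finally have S: "(\<Sum>x\<in>{x. poly p x = 0}. order x p) = 1 + (\<Sum>x\<in>{x. poly q x = 0}. order x q)" .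
    have "rr p \<longleftrightarrow> rr q"
      unfolding rr_def pq mapc_mult mapc_lin by auto
    then show ?thesis using S IH dq by auto
  qed
qed

lemma right_pos:
  fixes p :: "real poly"
  assumes lc: "lead_coeff p > 0" and nz: "\<forall>x\<ge>a. poly p x \<noteq> 0"
  shows "poly p a > 0"
proof (rule ccontr)
  assume "\<not> poly p a > 0"
  with nz have neg: "poly p a < 0" by (meson linorder_neqE_linordered_idom order_refl)
  obtain n where n: "\<forall>x\<ge>n. poly p x \<ge> lead_coeff p" using poly_pinfty_gt_lc[OF lc] by blast
  define x where "x = max (a+1) n"
  have px: "poly p x > 0" using n lc unfolding x_def by (meson max.cobounded2 order_less_le_trans)
  have "a < x" unfolding x_def by simp
  from poly_IVT_pos[OF this neg px] nz show False by force
qed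

lemma left_sgn:
  fixes p :: "real poly"
  assumes lc: "lead_coeff p > 0" and nz: "\<forall>x\<le>b. poly p x \<noteq> 0"
  shows "(-1) ^ degree p * poly p b > 0"
proof -
  define q where "q = smult ((-1) ^ degree p) (pcompose p [:0,-1:])"
  have pq: "poly q x = (-1) ^ degree p * poly p (-x)" for x
    unfolding q_def by (simp add: poly_pcompose)
  have "lead_coeff (pcompose p [:0,-1:]) = lead_coeff p * (-1) ^ degree p"
    by (subst lead_coeff_comp) auto
  then have "lead_coeff q = lead_coeff p"
    unfolding q_def by (simp add: mult.assoc[symmetric] power_mult_distrib[symmetric])
  with lc have "lead_coeff q > 0" by simp
  moreover have "\<forall>x\<ge>-b. poly q x \<noteq> 0" using nz by (simp add: pq)
  ultimately have "poly q (-b) > 0" by (rule right_pos)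
  then show ?thesis by (simp add: pq)
qed

lemma odd_noninfl:
  fixes f :: "real poly"
  assumes deg: "degree f > 1" and odd: "odd (order a (pderiv f))"
  shows "\<not> inflection_point f a"
proof
  assume infl: "inflection_point f a"
  define g where "g = pderiv (pderiv f)"
  have dg: "degree g = degree f - 2" unfolding g_def by (simp add: degree_pderiv)
  have f'0: "pderiv f \<noteq> 0" using deg by (simp add: pderiv_eq_0_iff)
  have g0: "g \<noteq> 0" unfolding g_def using deg
    by (simp add: pderiv_eq_0_iff degree_pderiv)
  have "order a (pderiv f) \<noteq> 0" using odd by (metis odd_pos neq0_conv)
  then have "poly (pderiv f) a = 0" using order_root by blast
  then have "order a (pderiv f) = Suc (order a g)" unfolding g_def using order_pderiv f'0 by blast
  then have ev: "even (order a g)" using odd by simp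
  obtain h where gh: "g = [:-a,1:] ^ order a g * h" and hdvd: "\<not> [:-a,1:] dvd h"
    using order_decomp[OF g0] by blast
  have ha: "poly h a \<noteq> 0" using hdvd poly_eq_0_iff_dvd by blast
  have lim: "(\<lambda>t. poly h t * poly h a) \<midarrow>a\<rightarrow> poly h a * poly h a"
    by (intro tendsto_intros)
  have "poly h a * poly h a > 0" using ha by (simp add: zero_less_mult_iff linorder_neq_iff) blast
  from LIM_fun_gt_zero[OF lim this] obtain d where d: "d > 0"
    and dd: "\<And>t. t \<noteq> a \<Longrightarrow> \<bar>a - t\<bar> < d \<Longrightarrow> 0 < poly h t * poly h a" by blast
  have gsgn: "0 < poly g t * poly h a" if "t \<noteq> a" "\<bar>a - t\<bar> < d" for t
  proof -
    have "poly g t = (t - a) ^ order a g * poly h t"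
    proof -
      have "poly g t = poly ([:-a,1:] ^ order a g * h) t" using gh by metis
      then show ?thesis by (simp add: poly_power)
    qed
    moreover have "(t - a) ^ order a g > 0" using ev that(1)
      by (simp add: zero_less_power_eq)
    ultimately show ?thesis using dd[OF that] by (simp add: mult.assoc)
  qed
  from infl obtain e where e: "e > 0" and
    sc: "((\<forall>t\<in>{a-e<..<a}. poly g t > 0) \<and> (\<forall>t\<in>{a<..<a+e}. poly g t < 0)) \<or>
         ((\<forall>t\<in>{a-e<..<a}. poly g t < 0) \<and> (\<forall>t\<in>{a<..<a+e}. poly g t > 0))"
    unfolding inflection_point_def g_def by blast
  define m where "m = min e d / 2"
  have m: "m > 0" "m < e" "m < d" using e d unfolding m_def by auto
  have s1: "0 < poly g (a - m) * poly h a" by (rule gsgn) (use m in auto)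
  have s2: "0 < poly g (a + m) * poly h a" by (rule gsgn) (use m in auto)
  have i1: "a - m \<in> {a-e<..<a}" and i2: "a + m \<in> {a<..<a+e}" using m by auto
  from s1 s2 have "poly g (a - m) * poly g (a + m) > 0"
    by (smt (verit) mult_neg_neg mult_pos_pos mult_pos_neg mult_neg_pos zero_less_mult_iff)
  moreover from sc i1 i2 have "poly g (a - m) * poly g (a + m) < 0"
    by (auto simp: mult_pos_neg mult_neg_pos)
  ultimately show False by simp
qed

lemma rsl_props:
  fixes S :: "real set"
  assumes fin: "finite S"
  defines "a \<equiv> \<lambda>i. rev (sorted_list_of_set S) ! (i - 1)"
  shows "\<And>i. 1 \<le> i \<Longrightarrow> i \<le> card S \<Longrightarrow> a i \<in> S"
    and "\<And>i j. 1 \<le> i \<Longrightarrow> i < j \<Longrightarrow> j \<le> card S \<Longrightarrow> a j < a i"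
    and "\<And>y. y \<in> S \<Longrightarrow> \<exists>i. 1 \<le> i \<and> i \<le> card S \<and> y = a i"
proof -
  define ys where "ys = sorted_list_of_set S"
  have len: "length ys = card S" unfolding ys_def by simp
  have set: "set ys = S" unfolding ys_def using fin by simp
  have ss: "sorted_wrt (<) ys" unfolding ys_def by simp
  have ai: "a i = ys ! (card S - i)" if "1 \<le> i" "i \<le> card S" for i
    unfolding a_def ys_def[symmetric] using that len by (simp add: rev_nth)
  show "a i \<in> S" if "1 \<le> i" "i \<le> card S" for i
    using ai[OF that] set len that by (metis diff_less less_le_trans nth_mem zero_less_one)
  show "a j < a i" if "1 \<le> i" "i < j" "j \<le> card S" for i j
    using ai[of i] ai[of j] that ss len by (simp add: sorted_wrt_nth_less)
  show "\<exists>i. 1 \<le> i \<and> i \<le> card S \<and> y = a i" if "y \<in> S" for y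
  proof -
    from that set obtain n where n: "n < length ys" "ys ! n = y" by (metis in_set_conv_nth)
    show ?thesis using n len ai[of "card S - n"] by (intro exI[of _ "card S - n"]) auto
  qed
qed

lemma decomp:
  fixes f :: "real poly"
  assumes "f \<noteq> 0"
  shows "\<exists>h. (\<forall>x. poly f x = (x - s) ^ order s f * poly h x) \<and> poly h s \<noteq> 0 \<and>
             lead_coeff h = lead_coeff f \<and> degree f = degree h + order s f"
proof -
  define m where "m = order s f"
  obtain h where fh: "f = [:-s,1:] ^ m * h" and hd: "\<not> [:-s,1:] dvd h"
    using order_decomp[OF assms] unfolding m_def by blast
  have h0: "h \<noteq> 0" using hd by auto
  have "poly f x = (x - s) ^ m * poly h x" for x
    unfolding fh by (simp add: poly_power)
  moreover have "poly h s \<noteq> 0" using hd poly_eq_0_iff_dvd by blast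
  moreover have "lead_coeff f = lead_coeff h"
    unfolding fh by (simp add: lead_coeff_mult lead_coeff_power)
  moreover have "degree f = degree h + m"
    unfolding fh by (simp add: degree_mult_eq h0 degree_linear_power)
  ultimately show ?thesis unfolding m_def by metis
qed

locale PA =
  fixes f :: "real poly"
  assumes deg: "degree f > 1" and lc: "lead_coeff f > 0"
    and dreal: "\<forall>z::complex. poly (map_poly complex_of_real (pderiv f)) z = 0 \<longrightarrow> z \<in> \<real>"
begin

definition "R = {x. poly f x = 0}"
definition "D = {x. poly (pderiv f) x = 0}"
definition "G = {x. poly (pderiv f) x = 0 \<and> poly f x \<noteq> 0}"
definition "nxt r = Min {s \<in> R. r < s}"
definition "gg r = (SOME x. r < x \<and> x < nxt r \<and> poly (pderiv f) x = 0)"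

lemma f0: "f \<noteq> 0" using deg by auto
lemma f'0: "pderiv f \<noteq> 0" using deg by (simp add: pderiv_eq_0_iff)
lemma finR: "finite R" unfolding R_def using f0 poly_roots_finite by blast
lemma finD: "finite D" unfolding D_def using f'0 poly_roots_finite by blast
lemma finG: "finite G" using finD unfolding G_def D_def by (rule rev_finite_subset) auto
lemma LD: "crit_noninfl f \<subseteq> D" unfolding crit_noninfl_def D_def by auto
lemma finL: "finite (crit_noninfl f)" using finD LD by (rule rev_finite_subset)

lemma sumD: "(\<Sum>x\<in>D. order x (pderiv f)) = degree f - 1"
  using count_main[OF f'0] dreal unfolding rr_def D_def by (simp add: degree_pderiv)

lemma key: "(\<Sum>x\<in>R. order x f) + (\<Sum>x\<in>G. order x (pderiv f)) = card R + (degree f - 1)"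
proof -
  have "(\<Sum>x\<in>R. order x f) = (\<Sum>x\<in>R. 1 + order x (pderiv f))"
    by (intro sum.cong refl) (use order_pderiv[OF f0] in \<open>auto simp: R_def\<close>)
  also have "\<dots> = card R + (\<Sum>x\<in>R. order x (pderiv f))" by (simp only: sum.distrib) simp
  also have "(\<Sum>x\<in>R. order x (pderiv f)) = (\<Sum>x\<in>R \<inter> D. order x (pderiv f))"
    using finR by (intro sum.mono_neutral_right) (auto simp: D_def order_root)
  finally have 1: "(\<Sum>x\<in>R. order x f) = card R + (\<Sum>x\<in>R \<inter> D. order x (pderiv f))" .
  have "D = (R \<inter> D) \<union> G" "(R \<inter> D) \<inter> G = {}" unfolding R_def D_def G_def by auto
  then have "(\<Sum>x\<in>D. order x (pderiv f)) = (\<Sum>x\<in>R \<inter> D. order x (pderiv f)) + (\<Sum>x\<in>G. order x (pderiv f))"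
    using finD finG by (metis finite_Un sum.union_disjoint)
  with 1 sumD show ?thesis by simp
qed

lemma Gge: "x \<in> G \<Longrightarrow> order x (pderiv f) \<ge> 1"
  unfolding G_def using f'0 order_root[of "pderiv f" x] by (simp add: Suc_le_eq)

lemma nxt:
  assumes "r \<in> R" "r \<noteq> Max R"
  shows "nxt r \<in> R" "r < nxt r" "\<And>s. s \<in> R \<Longrightarrow> r < s \<Longrightarrow> nxt r \<le> s"
proof -
  have "r \<le> Max R" using assms finR by simp
  with assms have ne: "{s \<in> R. r < s} \<noteq> {}" using finR
    by (metis (mono_tags, lifting) Max_in empty_Collect_eq empty_iff order_neq_le_trans)
  have fin: "finite {s \<in> R. r < s}" using finR by simp
  have "nxt r \<in> {s \<in> R. r < s}" unfolding nxt_def using Min_in[OF fin ne] .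
  then show "nxt r \<in> R" "r < nxt r" by auto
  show "nxt r \<le> s" if "s \<in> R" "r < s" for s
    unfolding nxt_def using fin that by (intro Min_le) auto
qed

lemma gg:
  assumes "r \<in> R" "r \<noteq> Max R"
  shows "r < gg r" "gg r < nxt r" "gg r \<in> G"
proof -
  have ex: "\<exists>x. r < x \<and> x < nxt r \<and> poly (pderiv f) x = 0"
  proof -
    have "\<exists>z. r < z \<and> z < nxt r \<and> DERIV (poly f) z :> 0"
    proof (rule Rolle)
      show "r < nxt r" using nxt assms by blast
      show "poly f r = poly f (nxt r)" using nxt(1)[OF assms] assms(1) by (simp add: R_def)
      show "continuous_on {r..nxt r} (poly f)" by (auto intro: continuous_intros)
      show "poly f differentiable (at x)" for x using poly_DERIV real_differentiable_def by blast
    qed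
    then obtain z where "r < z" "z < nxt r" "DERIV (poly f) z :> 0" by blast
    moreover have "DERIV (poly f) z :> poly (pderiv f) z" by simp
    ultimately show ?thesis using DERIV_unique by blast
  qed
  then have P: "r < gg r \<and> gg r < nxt r \<and> poly (pderiv f) (gg r) = 0"
    unfolding gg_def by (rule someI_ex)
  then show "r < gg r" "gg r < nxt r" by auto
  have "poly f (gg r) \<noteq> 0"
  proof
    assume "poly f (gg r) = 0"
    then have "gg r \<in> R" by (simp add: R_def)
    with nxt(3)[OF assms this] P show False by auto
  qed
  with P show "gg r \<in> G" by (simp add: G_def)
qed

lemma gg_mono:
  assumes "r1 \<in> R" "r1 \<noteq> Max R" "r2 \<in> R" "r2 \<noteq> Max R" "r1 < r2"
  shows "gg r1 < gg r2"
proof -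
  have "gg r1 < nxt r1" using gg assms by blast
  also have "nxt r1 \<le> r2" using nxt(3) assms by blast
  also have "r2 < gg r2" using gg assms by blast
  finally show ?thesis .
qed

lemma gg_inj: "inj_on gg (R - {Max R})"
  by (intro inj_onI) (metis DiffE gg_mono insertI1 linorder_neqE_linordered_idom less_irrefl)

lemma rr_struct:
  assumes "rr f"
  shows "(\<Sum>x\<in>R. order x f) = degree f" "R \<noteq> {}" "\<And>x. x \<in> G \<Longrightarrow> order x (pderiv f) = 1"
    "G = gg ` (R - {Max R})"
proof -
  show S: "(\<Sum>x\<in>R. order x f) = degree f" using count_main[OF f0] assms unfolding R_def by simp
  then show ne: "R \<noteq> {}" using deg by auto
  from key S deg have SG: "(\<Sum>x\<in>G. order x (pderiv f)) + 1 = card R" by simp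
  have sub: "gg ` (R - {Max R}) \<subseteq> G" using gg(3) by blast
  have cimg: "card (gg ` (R - {Max R})) = card R - 1"
    using card_image[OF gg_inj] finR ne by (simp add: Max_in)
  have "card G \<le> (\<Sum>x\<in>G. order x (pderiv f))"
    using sum_mono[of G "\<lambda>_. 1::nat" "\<lambda>x. order x (pderiv f)"] Gge by simp
  moreover have "card R - 1 \<le> card G" using cimg card_mono[OF finG sub] by simp
  ultimately have cG: "card G = card R - 1" "(\<Sum>x\<in>G. order x (pderiv f)) = card G" using SG by linarith+
  show "G = gg ` (R - {Max R})" using card_subset_eq[OF finG sub] cimg cG by simp
  show "order x (pderiv f) = 1" if x: "x \<in> G" for x
  proof (rule ccontr)
    assume "order x (pderiv f) \<noteq> 1"
    with Gge[OF x] have "1 < order x (pderiv f)" by simp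
    then have "(\<Sum>x\<in>G. 1::nat) < (\<Sum>x\<in>G. order x (pderiv f))"
      using finG x Gge by (intro sum_strict_mono_ex1) auto
    with cG show False by simp
  qed
qed

lemma rr_MULT: "rr f \<Longrightarrow> MULT f"
  unfolding MULT_def using rr_struct(3) by (force simp: G_def)

lemma rr_GL: "rr f \<Longrightarrow> G \<subseteq> crit_noninfl f"
  using rr_struct(3) odd_noninfl[OF deg] by (force simp: G_def crit_noninfl_def)

abbreviation "L \<equiv> crit_noninfl f"
abbreviation "k \<equiv> card (crit_noninfl f)"

lemma AL:
  shows "\<And>i. 1 \<le> i \<Longrightarrow> i \<le> k \<Longrightarrow> alpha f i \<in> L"
    and "\<And>i j. 1 \<le> i \<Longrightarrow> i < j \<Longrightarrow> j \<le> k \<Longrightarrow> alpha f j < alpha f i"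
    and "\<And>y. y \<in> L \<Longrightarrow> \<exists>i. 1 \<le> i \<and> i \<le> k \<and> y = alpha f i"
  using rsl_props[OF finL] unfolding alpha_def[abs_def] by blast+

lemma AL_le: "1 \<le> i \<Longrightarrow> i \<le> j \<Longrightarrow> j \<le> k \<Longrightarrow> alpha f j \<le> alpha f i"
  using AL(2)[of i j] by (cases "i = j") auto

lemma fv0: "fval f 0 = 1" by (simp add: fval_def)
lemma fvk: "fval f (k+1) = (-1) ^ degree f" by (simp add: fval_def)
lemma fvi: "1 \<le> i \<Longrightarrow> i \<le> k \<Longrightarrow> fval f i = poly f (alpha f i)" by (simp add: fval_def)

lemma adj:
  assumes "1 \<le> i" "i \<le> k + 1" "y \<in> L"
    "i \<le> k \<longrightarrow> alpha f i < y" "2 \<le> i \<longrightarrow> y < alpha f (i-1)"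
  shows False
proof -
  obtain j where j: "1 \<le> j" "j \<le> k" "y = alpha f j" using AL(3)[OF assms(3)] by blast
  have "j < i"
  proof (rule ccontr)
    assume "\<not> j < i"
    then have "i \<le> k" "i \<le> j" using j by auto
    then show False using AL_le[of i j] j assms(1,4) by auto
  qed
  moreover have "i - 1 < j"
  proof (rule ccontr)
    assume "\<not> i - 1 < j"
    then have "2 \<le> i" "j \<le> i - 1" using j by auto
    moreover have "i - 1 \<le> k" using assms(2) by simp
    ultimately show False using AL_le[of j "i-1"] j assms(5) by auto
  qed
  ultimately show False by simp
qed

lemma neg_odd_pow: "odd m \<Longrightarrow> (-1::real) ^ (d + m) = - ((-1) ^ d)"
  by (simp add: power_add)

lemma rr_SIGN:
  assumes rrf: "rr f"
  shows "SIGN f"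
  unfolding SIGN_def
proof
  fix i assume "i \<in> {1..k+1}"
  then have i: "1 \<le> i" "i \<le> k + 1" by auto
  show "fval f i * fval f (i - 1) \<le> 0"
  proof (rule ccontr)
    assume "\<not> fval f i * fval f (i - 1) \<le> 0"
    then have pos: "fval f i * fval f (i - 1) > 0" by simp
    define J where "J = {x. (i \<le> k \<longrightarrow> alpha f i < x) \<and> (2 \<le> i \<longrightarrow> x < alpha f (i-1))}"
    have noL: "y \<in> J \<Longrightarrow> y \<notin> L" for y using adj[OF i] unfolding J_def by blast
    have loG: "alpha f i \<in> G" if "i \<le> k"
    proof -
      have "fval f i \<noteq> 0" using pos by auto
      then show ?thesis using AL(1)[OF i(1) that] LD fvi[OF i(1) that] by (auto simp: G_def D_def)
    qed
    have hiG: "alpha f (i-1) \<in> G" if "2 \<le> i"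
    proof -
      have "fval f (i-1) \<noteq> 0" using pos by auto
      moreover have "1 \<le> i - 1" "i - 1 \<le> k" using that i by auto
      ultimately show ?thesis using AL(1)[of "i-1"] LD fvi[of "i-1"] by (auto simp: G_def D_def)
    qed
    have GL: "G \<subseteq> L" using rr_GL[OF rrf] .
    have GS: "G = gg ` (R - {Max R})" using rr_struct(4)[OF rrf] .
    have Rne: "R \<noteq> {}" using rr_struct(2)[OF rrf] .
    define T where "T = R \<inter> J"
    have Tne: "T \<noteq> {}"
    proof
      assume T0: "T = {}"
      show False
      proof (cases "i \<le> k")
        case True
        with loG GS obtain r where r: "r \<in> R" "r \<noteq> Max R" "alpha f i = gg r" by auto
        have n1: "nxt r \<in> R" "alpha f i < nxt r" using nxt[OF r(1,2)] gg[OF r(1,2)] r(3) by auto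
        show False
        proof (cases "2 \<le> i")
          case False
          then have "nxt r \<in> T" using n1 True unfolding T_def J_def by auto
          with T0 show False by auto
        next
          case i2: True
          have "nxt r \<notin> J" using T0 n1 unfolding T_def by auto
          then have n2: "alpha f (i-1) \<le> nxt r" using n1 True i2 unfolding J_def by auto
          from hiG[OF i2] GS obtain r' where r': "r' \<in> R" "r' \<noteq> Max R" "alpha f (i-1) = gg r'" by auto
          have "r' < alpha f (i-1)" using gg[OF r'(1,2)] r'(3) by auto
          moreover have "r' \<notin> J" using T0 r' unfolding T_def by auto
          ultimately have "r' \<le> alpha f i" using True i2 unfolding J_def by auto
          moreover have "r' \<noteq> alpha f i" using loG[OF True] r'(1) by (auto simp: G_def R_def)
          ultimately have r'lo: "r' < alpha f i" by simp
          have lohi: "alpha f i < alpha f (i-1)" using AL(2)[of "i-1" i] i i2 True by auto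
          have "r = r'"
          proof (rule ccontr)
            assume "r \<noteq> r'"
            then consider "r < r'" | "r' < r" by linarith
            then show False
            proof cases
              case 1
              then have "nxt r \<le> r'" using nxt(3)[OF r(1,2) r'(1)] by blast
              with r'lo n1 show False by simp
            next
              case 2
              then have "nxt r' \<le> r" using nxt(3)[OF r'(1,2) r(1)] by blast
              moreover have "r < alpha f i" using gg[OF r(1,2)] r(3) by simp
              moreover have "alpha f (i-1) < nxt r'" using gg[OF r'(1,2)] r'(3) by simp
              ultimately show False using lohi by simp
            qed
          qed
          with r r' lohi show False by simp
        qed
      next
        case False
        then have ik: "i = k + 1" using i by simp
        show False
        proof (cases "2 \<le> i")
          case True
          from hiG[OF True] GS obtain r' where r': "r' \<in> R" "r' \<noteq> Max R" "alpha f (i-1) = gg r'" by auto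
          have "r' < alpha f (i-1)" using gg[OF r'(1,2)] r'(3) by auto
          then have "r' \<in> T" using r' False unfolding T_def J_def by auto
          with T0 show False by auto
        next
          case False
          then have "J = UNIV" unfolding J_def using ik by auto
          with T0 Rne show False unfolding T_def by auto
        qed
      qed
    qed
    have Tle1: "s1 = s2" if "s1 \<in> T" "s2 \<in> T" for s1 s2
    proof (rule ccontr)
      assume "s1 \<noteq> s2"
      have main: False if "a1 \<in> T" "a2 \<in> T" "a1 < a2" for a1 a2
      proof -
        have a1R: "a1 \<in> R" "a1 \<noteq> Max R" using that finR T_def
          by (auto, metis Max_ge finR leD)
        have "a1 < gg a1" "gg a1 < nxt a1" "gg a1 \<in> G" using gg[OF a1R] by auto
        moreover have "nxt a1 \<le> a2" using nxt(3)[OF a1R] that T_def by auto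
        ultimately have "gg a1 \<in> J" using that unfolding T_def J_def by auto
        with noL \<open>gg a1 \<in> G\<close> GL show False by blast
      qed
      from \<open>s1 \<noteq> s2\<close> consider "s1 < s2" | "s2 < s1" by linarith
      then show False by cases (use main that in blast)+
    qed
    from Tne obtain s where sT: "s \<in> T" by blast
    then have sR: "poly f s = 0" "s \<in> J" unfolding T_def R_def by auto
    have onlys: "x \<in> J \<Longrightarrow> poly f x = 0 \<Longrightarrow> x = s" for x
      using Tle1[OF _ sT] unfolding T_def R_def by auto
    define m where "m = order s f"
    have m1: "m \<noteq> 0" using sR f0 order_root unfolding m_def by blast
    have modd: "odd m"
    proof
      assume "even m"
      then have "odd (order s (pderiv f))" using order_pderiv[OF f0 sR(1)] m1 unfolding m_def by simp
      then have "\<not> inflection_point f s" by (rule odd_noninfl[OF deg])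
      moreover have "poly (pderiv f) s = 0" using \<open>odd (order s (pderiv f))\<close> order_root
        by (metis odd_pos neq0_conv)
      ultimately have "s \<in> L" unfolding crit_noninfl_def by auto
      with noL sR show False by blast
    qed
    obtain h where fh: "\<And>x. poly f x = (x - s) ^ m * poly h x" and hs: "poly h s \<noteq> 0"
      and lch: "lead_coeff h = lead_coeff f" and dh: "degree f = degree h + m"
      using decomp[OF f0, of s] unfolding m_def by blast
    have hJ: "x \<in> J \<Longrightarrow> poly h x \<noteq> 0" for x using onlys fh hs by fastforce
    have sgnK: "(-1::real) ^ degree f = - ((-1) ^ degree h)" using dh neg_odd_pow[OF modd] by simp
    have lch': "lead_coeff h > 0" using lch lc by simp
    show False
    proof (cases "i \<le> k")
      case ik: True
      define lo where "lo = alpha f i"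
      have flo: "poly f lo \<noteq> 0" using loG[OF ik] unfolding lo_def G_def by auto
      have slo: "lo < s" using sR ik unfolding J_def lo_def by auto
      have plo: "(lo - s) ^ m < 0" using slo modd by (simp add: power_less_zero_eq)
      have hlo: "poly h lo \<noteq> 0" using flo fh by auto
      show False
      proof (cases "2 \<le> i")
        case i2: True
        define hi where "hi = alpha f (i-1)"
        have fhi: "poly f hi \<noteq> 0" using hiG[OF i2] unfolding hi_def G_def by auto
        have shi: "s < hi" using sR i2 unfolding J_def hi_def by auto
        have phi: "(hi - s) ^ m > 0" using shi by simp
        have hhi: "poly h hi \<noteq> 0" using fhi fh by auto
        have "poly h lo * poly h hi > 0"
        proof (rule ccontr)
          assume "\<not> poly h lo * poly h hi > 0"
          moreover have "poly h lo * poly h hi \<noteq> 0" using hlo hhi by simp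
          ultimately have "poly h lo * poly h hi < 0" by linarith
          from poly_IVT[OF _ this] slo shi obtain x where "lo < x" "x < hi" "poly h x = 0" by force
          then show False using hJ ik i2 unfolding J_def lo_def hi_def by auto
        qed
        moreover have "fval f i * fval f (i-1) = ((lo - s) ^ m * (hi - s) ^ m) * (poly h lo * poly h hi)"
          using fvi[OF i(1) ik] fvi[of "i-1"] i2 ik unfolding lo_def hi_def fh by simp
        moreover have "(lo - s) ^ m * (hi - s) ^ m < 0" using plo phi by (simp add: mult_neg_pos)
        ultimately show False using pos by (metis mult_neg_pos not_less_iff_gr_or_eq order.asym)
      next
        case False
        then have i1: "i = 1" using i by simp
        have "\<forall>x\<ge>lo. poly h x \<noteq> 0"
        proof (intro allI impI)
          fix x assume "lo \<le> x"
          moreover have "x \<in> J" if "lo < x" using that i1 ik unfolding J_def lo_def by auto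
          ultimately show "poly h x \<noteq> 0" using hlo hJ[of x] by (cases "x = lo") auto
        qed
        from right_pos[OF lch' this] have "poly h lo > 0" .
        then have "poly f lo < 0" using fh plo by (simp add: mult_neg_pos)
        then show False using pos fvi[OF i(1) ik] fv0 i1 unfolding lo_def by simp
      qed
    next
      case False
      then have ik: "i = k + 1" using i by simp
      show False
      proof (cases "2 \<le> i")
        case i2: True
        define hi where "hi = alpha f (i-1)"
        have fhi: "poly f hi \<noteq> 0" using hiG[OF i2] unfolding hi_def G_def by auto
        have shi: "s < hi" using sR i2 unfolding J_def hi_def by auto
        have phi: "(hi - s) ^ m > 0" using shi by simp
        have hhi: "poly h hi \<noteq> 0" using fhi fh by auto
        have "\<forall>x\<le>hi. poly h x \<noteq> 0"
        proof (intro allI impI)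
          fix x assume "x \<le> hi"
          moreover have "x \<in> J" if "x < hi" using that ik unfolding J_def hi_def by auto
          ultimately show "poly h x \<noteq> 0" using hhi hJ[of x] by (cases "x = hi") auto
        qed
        from left_sgn[OF lch' this] have "(-1) ^ degree h * poly h hi > 0" .
        moreover have "fval f i * fval f (i-1) = - ((hi - s) ^ m * ((-1) ^ degree h * poly h hi))"
          using fvk fvi[of "i-1"] i2 ik sgnK unfolding hi_def fh by simp
        ultimately show False using pos phi by (smt (verit) mult_pos_pos)
      next
        case False
        then have i1: "i = 1" and k0: "k = 0" using ik by auto
        have "J = UNIV" unfolding J_def using i1 k0 by auto
        then have hn: "poly h x \<noteq> 0" for x using hJ by auto
        have "poly h 0 > 0" using right_pos[OF lch'] hn by blast
        moreover have "(-1) ^ degree h * poly h 0 > 0" using left_sgn[OF lch'] hn by blast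
        ultimately have "(-1::real) ^ degree h > 0" by (simp add: zero_less_mult_iff)
        moreover have "fval f i * fval f (i-1) = (-1) ^ degree f" using fvk fv0 i1 k0 by simp
        ultimately show False using pos sgnK by simp
      qed
    qed
  qed
qed

lemma back_rr:
  assumes S: "SIGN f" and M: "MULT f"
  shows "rr f"
proof -
  have ordG: "order x (pderiv f) = 1" if "x \<in> G" for x
  proof (rule ccontr)
    assume "order x (pderiv f) \<noteq> 1"
    with Gge[OF that] have "order x (pderiv f) > 1" by simp
    with M that show False unfolding MULT_def G_def by blast
  qed
  have GL: "G \<subseteq> L"
  proof
    fix x assume x: "x \<in> G"
    then have "\<not> inflection_point f x" using ordG[OF x] odd_noninfl[OF deg, of x] by simp
    with x show "x \<in> L" unfolding G_def crit_noninfl_def by simp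
  qed
  have SG: "(\<Sum>x\<in>G. order x (pderiv f)) = card G" using ordG by simp
  define Z where "Z = {i\<in>{1..k}. fval f i = 0}"
  define NZ where "NZ = {i\<in>{1..k}. fval f i \<noteq> 0}"
  define P where "P = {i\<in>{0..k}. fval f i \<noteq> 0 \<and> fval f (i+1) \<noteq> 0}"
  have ainj: "inj_on (alpha f) {1..k}"
  proof (rule inj_onI, rule ccontr)
    fix x y assume xy: "x \<in> {1..k}" "y \<in> {1..k}" "alpha f x = alpha f y" "x \<noteq> y"
    then consider "x < y" | "y < x" by linarith
    then show False
    proof cases
      case 1 then show False using AL(2)[of x y] xy by auto
    next
      case 2 then show False using AL(2)[of y x] xy by auto
    qed
  qed
  have aNZ: "alpha f ` NZ = G"
  proof
    show "alpha f ` NZ \<subseteq> G"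
    proof
      fix x assume "x \<in> alpha f ` NZ"
      then obtain j where j: "j \<in> NZ" "x = alpha f j" by blast
      then have j1: "1 \<le> j" "j \<le> k" "fval f j \<noteq> 0" unfolding NZ_def by auto
      have "x \<in> L" using AL(1)[OF j1(1,2)] j(2) by simp
      then have "poly (pderiv f) x = 0" using LD unfolding D_def by blast
      moreover have "poly f x \<noteq> 0" using fvi[OF j1(1,2)] j1(3) j(2) by simp
      ultimately show "x \<in> G" unfolding G_def by simp
    qed
    show "G \<subseteq> alpha f ` NZ"
    proof
      fix x assume x: "x \<in> G"
      then obtain j where j: "1 \<le> j" "j \<le> k" "x = alpha f j" using GL AL(3) by blast
      then have "j \<in> NZ" using x fvi[OF j(1,2)] unfolding NZ_def G_def by auto
      with j show "x \<in> alpha f ` NZ" by blast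
    qed
  qed
  have NZS: "NZ \<subseteq> {1..k}" unfolding NZ_def by auto
  have cNZ: "card NZ = card G"
    using aNZ card_image[OF inj_on_subset[OF ainj NZS]] by simp
  have cZNZ: "card Z + card NZ = k"
  proof -
    have "Z \<union> NZ = {1..k}" "Z \<inter> NZ = {}" unfolding Z_def NZ_def by auto
    moreover have "finite Z" "finite NZ" unfolding Z_def NZ_def by auto
    ultimately have "card Z + card NZ = card {1..k}" using card_Un_disjoint[of Z NZ] by simp
    then show ?thesis by simp
  qed
  have rho: "\<exists>x. poly f x = 0 \<and> (i+1 \<le> k \<longrightarrow> alpha f (i+1) < x) \<and> (1 \<le> i \<longrightarrow> x < alpha f i)"
    if iP: "i \<in> P" for i
  proof -
    have "i + 1 \<in> {1..k+1}" using iP unfolding P_def by auto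
    with S have "fval f (i+1) * fval f (i+1-1) \<le> 0" unfolding SIGN_def by (rule_tac bspec) auto
    then have "fval f (i+1) * fval f i \<le> 0" by simp
    moreover have "fval f (i+1) * fval f i \<noteq> 0" using iP unfolding P_def by auto
    ultimately have neg: "fval f (i+1) * fval f i < 0" by linarith
    have ik: "i \<le> k" using iP unfolding P_def by auto
    show ?thesis
    proof (cases "1 \<le> i")
      case i1: True
      show ?thesis
      proof (cases "i + 1 \<le> k")
        case True
        have "alpha f (i+1) < alpha f i" using AL(2)[OF i1 _ True] by simp
        moreover have "poly f (alpha f (i+1)) * poly f (alpha f i) < 0"
          using neg fvi[OF i1 ik] fvi[of "i+1"] True by simp
        ultimately obtain x where "alpha f (i+1) < x" "x < alpha f i" "poly f x = 0"
          using poly_IVT by blast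
        then show ?thesis by blast
      next
        case False
        then have ikk: "i = k" using ik by simp
        have lt: "(-1) ^ degree f * poly f (alpha f k) < 0" using neg fvk fvi[OF i1 ik] ikk by simp
        have "\<not> (\<forall>x\<le>alpha f k. poly f x \<noteq> 0)"
        proof
          assume "\<forall>x\<le>alpha f k. poly f x \<noteq> 0"
          from left_sgn[OF lc this] lt show False by simp
        qed
        then obtain x where x: "x \<le> alpha f k" "poly f x = 0" by blast
        moreover have "poly f (alpha f k) \<noteq> 0" using neg fvi[OF i1 ik] ikk by auto
        ultimately have "x < alpha f k" by (cases "x = alpha f k") auto
        with x ikk show ?thesis by auto
      qed
    next
      case False
      then have i0: "i = 0" by simp
      show ?thesis
      proof (cases "1 \<le> k")
        case True
        have "poly f (alpha f 1) < 0" using neg fv0 fvi[OF _ True] i0 by (simp add: mult_less_0_iff)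
        have "\<not> (\<forall>x\<ge>alpha f 1. poly f x \<noteq> 0)"
        proof
          assume "\<forall>x\<ge>alpha f 1. poly f x \<noteq> 0"
          from right_pos[OF lc this] \<open>poly f (alpha f 1) < 0\<close> show False by simp
        qed
        then obtain x where x: "alpha f 1 \<le> x" "poly f x = 0" by blast
        moreover have "poly f (alpha f 1) \<noteq> 0" using \<open>poly f (alpha f 1) < 0\<close> by simp
        ultimately have "alpha f 1 < x" by (cases "x = alpha f 1") auto
        with x i0 show ?thesis by auto
      next
        case False
        then have k0: "k = 0" by simp
        have "(-1::real) ^ degree f < 0" using neg fv0 fvk i0 k0 by simp
        have "\<exists>x. poly f x = 0"
        proof (rule ccontr)
          assume "\<nexists>x. poly f x = 0"
          then have "poly f 0 > 0" "(-1) ^ degree f * poly f 0 > 0"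
            using right_pos[OF lc] left_sgn[OF lc] by blast+
          with \<open>(-1::real) ^ degree f < 0\<close> show False by (simp add: zero_less_mult_iff)
        qed
        with i0 k0 show ?thesis by auto
      qed
    qed
  qed
  have "\<forall>i\<in>P. \<exists>x. poly f x = 0 \<and> (i+1 \<le> k \<longrightarrow> alpha f (i+1) < x) \<and> (1 \<le> i \<longrightarrow> x < alpha f i)"
    using rho by blast
  then obtain r where r0: "\<forall>i\<in>P. poly f (r i) = 0 \<and> (i+1 \<le> k \<longrightarrow> alpha f (i+1) < r i) \<and> (1 \<le> i \<longrightarrow> r i < alpha f i)"
    by (rule bchoice[elim_format]) blast
  have r: "poly f (r i) = 0 \<and> (i+1 \<le> k \<longrightarrow> alpha f (i+1) < r i) \<and> (1 \<le> i \<longrightarrow> r i < alpha f i)"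
    if "i \<in> P" for i using r0 that by blast
  have rne: "r i \<noteq> alpha f j" if "i \<in> P" "1 \<le> j" "j \<le> k" for i j
  proof (cases "i + 1 \<le> j")
    case True
    then have "alpha f j \<le> alpha f (i+1)" using AL_le[of "i+1" j] that by simp
    then show ?thesis using r[OF that(1)] True that by auto
  next
    case False
    moreover have "i \<le> k" using that(1) unfolding P_def by simp
    ultimately have "alpha f i \<le> alpha f j" using AL_le[of j i] that by simp
    then show ?thesis using r[OF that(1)] False that by auto
  qed
  have rlt: "r i' < r i" if "i \<in> P" "i' \<in> P" "i < i'" for i i'
  proof -
    have i'k: "i' \<le> k" using that unfolding P_def by auto
    have "r i' < alpha f i'" using r[OF that(2)] that by auto
    also have "alpha f i' \<le> alpha f (i+1)" using AL_le[of "i+1" i'] that i'k by simp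
    also have "alpha f (i+1) < r i" using r[OF that(1)] that i'k by auto
    finally show ?thesis .
  qed
  have rinj: "inj_on r P"
  proof (rule inj_onI, rule ccontr)
    fix x y assume xy: "x \<in> P" "y \<in> P" "r x = r y" "x \<noteq> y"
    then consider "x < y" | "y < x" by linarith
    then show False
    proof cases
      case 1 then show False using rlt[of x y] xy by auto
    next
      case 2 then show False using rlt[of y x] xy by auto
    qed
  qed
  have sub: "alpha f ` Z \<union> r ` P \<subseteq> R"
    using r fvi unfolding Z_def R_def by auto
  have disj: "alpha f ` Z \<inter> r ` P = {}"
  proof (rule ccontr)
    assume "alpha f ` Z \<inter> r ` P \<noteq> {}"
    then obtain j i where "j \<in> Z" "i \<in> P" "alpha f j = r i" by auto
    with rne[of i j] show False unfolding Z_def by auto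
  qed
  have finP: "finite P" unfolding P_def by simp
  have finZ: "finite Z" unfolding Z_def by simp
  have ZS: "Z \<subseteq> {1..k}" unfolding Z_def by auto
  have c1: "card (alpha f ` Z) = card Z" using card_image[OF inj_on_subset[OF ainj ZS]] .
  have c2: "card (r ` P) = card P" using card_image[OF rinj] .
  have "card (alpha f ` Z \<union> r ` P) = card (alpha f ` Z) + card (r ` P)"
    using card_Un_disjoint[OF _ _ disj] finP finZ by simp
  then have "card Z + card P = card (alpha f ` Z \<union> r ` P)" using c1 c2 by simp
  also have "\<dots> \<le> card R" using card_mono[OF finR sub] .
  finally have cR: "card Z + card P \<le> card R" .
  define Q where "Q = {0..k} - Z - (\<lambda>j. j - 1) ` Z"
  have QP: "Q \<subseteq> P"
  proof
    fix i assume "i \<in> Q"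
    then have i1: "i \<le> k" "i \<notin> Z" "i \<notin> (\<lambda>j. j - 1) ` Z" unfolding Q_def by auto
    have "i + 1 \<notin> Z"
    proof
      assume "i + 1 \<in> Z"
      then have "i \<in> (\<lambda>j. j - 1) ` Z" by (rule image_eqI[rotated]) simp
      with i1 show False by simp
    qed
    with i1 have i: "i \<le> k" "i \<notin> Z" "i + 1 \<notin> Z" by auto
    have "fval f i \<noteq> 0" using i fv0 unfolding Z_def by (cases "i = 0") auto
    moreover have "fval f (i+1) \<noteq> 0" using i fvk unfolding Z_def by (cases "i = k") auto
    ultimately show "i \<in> P" using i unfolding P_def by auto
  qed
  have "card {0..k} - card Z \<le> card ({0..k} - Z)"
    by (rule diff_card_le_card_Diff) (simp add: finZ)
  moreover have "card ({0..k} - Z) - card ((\<lambda>j. j - 1) ` Z) \<le> card Q"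
    unfolding Q_def by (rule diff_card_le_card_Diff) (simp add: finZ)
  ultimately have "card {0..k} - card Z - card ((\<lambda>j. j - 1) ` Z) \<le> card Q" by linarith
  moreover have "card ((\<lambda>j. j - 1) ` Z) \<le> card Z" using card_image_le finZ by blast
  moreover have "card Q \<le> card P" using card_mono[OF finP QP] .
  ultimately have "k + 1 - 2 * card Z \<le> card P" by simp
  with cR cZNZ cNZ have "card G + 1 \<le> card R" by linarith
  with key SG have "degree f \<le> (\<Sum>x\<in>R. order x f)" by linarith
  with count_main[OF f0] show ?thesis unfolding R_def by (meson le_antisym)
qed

lemma rr_dbound: "rr f \<Longrightarrow> poly (pderiv f) x = 0 \<Longrightarrow> \<exists>r\<in>R. r \<le> x"
proof -
  assume rrf: "rr f" and x: "poly (pderiv f) x = 0"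
  show ?thesis
  proof (cases "poly f x = 0")
    case True then show ?thesis unfolding R_def by auto
  next
    case False
    then have "x \<in> G" using x unfolding G_def by auto
    then obtain r where "r \<in> R" "r \<noteq> Max R" "x = gg r" using rr_struct(4)[OF rrf] by auto
    then show ?thesis using gg(1)[of r] by (intro bexI[of _ r]) auto
  qed
qed

lemma fwd_sign0:
  assumes "\<forall>x\<in>R. 0 \<le> x" "poly f 0 \<noteq> 0"
  shows "(-1) ^ degree f * poly f 0 > 0"
proof -
  have "\<forall>x\<le>0. poly f x \<noteq> 0"
  proof (intro allI impI)
    fix x :: real assume "x \<le> 0"
    then show "poly f x \<noteq> 0" using assms unfolding R_def by (cases "x = 0") force+
  qed
  from left_sgn[OF lc this] show ?thesis .
qed

lemma back_nonneg:
  assumes rrf: "rr f" and d: "\<forall>x. poly (pderiv f) x = 0 \<longrightarrow> 0 \<le> x"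
    and s0: "(-1) ^ degree f * poly f 0 \<ge> 0"
  shows "\<forall>x\<in>R. 0 \<le> x"
proof (rule ccontr)
  assume "\<not> (\<forall>x\<in>R. 0 \<le> x)"
  then obtain x where x: "x \<in> R" "x < 0" by force
  have Rne: "R \<noteq> {}" using x by auto
  define r0 where "r0 = Min R"
  have r0R: "r0 \<in> R" unfolding r0_def using finR Rne by simp
  have r0le: "\<And>y. y \<in> R \<Longrightarrow> r0 \<le> y" unfolding r0_def using finR by simp
  have r0neg: "r0 < 0" using r0le[OF x(1)] x(2) by simp
  have fr0: "poly f r0 = 0" using r0R unfolding R_def by simp
  have ord1: "order r0 f = 1"
  proof (rule ccontr)
    assume "order r0 f \<noteq> 1"
    moreover have "order r0 f \<noteq> 0" using fr0 f0 order_root by blast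
    ultimately have "order r0 (pderiv f) \<noteq> 0" using order_pderiv[OF f0 fr0] by simp
    then have "poly (pderiv f) r0 = 0" using order_root by blast
    with d r0neg show False by force
  qed
  have nmax: "r0 \<noteq> Max R"
  proof
    assume "r0 = Max R"
    then have "R = {r0}" using r0le finR r0R by (metis Max_ge antisym singleton_iff subsetI subset_singleton_iff Rne)
    then have "(\<Sum>x\<in>R. order x f) = 1" using ord1 by simp
    with rr_struct(1)[OF rrf] deg show False by simp
  qed
  have "gg r0 \<in> G" using gg(3)[OF r0R nmax] .
  then have "gg r0 \<ge> 0" using d unfolding G_def by blast
  then have nx: "nxt r0 > 0" using gg(2)[OF r0R nmax] by simp
  have only: "y = r0" if "y \<le> 0" "poly f y = 0" for y
  proof -
    have yR: "y \<in> R" using that unfolding R_def by simp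
    have "r0 \<le> y" using r0le[OF yR] .
    moreover have "\<not> r0 < y" using nxt(3)[OF r0R nmax yR] nx that(1) by force
    ultimately show ?thesis by simp
  qed
  obtain h where fh: "\<And>y. poly f y = (y - r0) ^ order r0 f * poly h y" and hs: "poly h r0 \<noteq> 0"
    and lch: "lead_coeff h = lead_coeff f" and dh: "degree f = degree h + order r0 f"
    using decomp[OF f0, of r0] by blast
  have "\<forall>y\<le>0. poly h y \<noteq> 0"
  proof (intro allI impI)
    fix y :: real assume y: "y \<le> 0"
    show "poly h y \<noteq> 0"
    proof
      assume "poly h y = 0"
      then have "poly f y = 0" using fh by simp
      then have "y = r0" using only y by simp
      with hs \<open>poly h y = 0\<close> show False by simp
    qed
  qed
  from left_sgn[OF _ this] lch lc have hp: "(-1) ^ degree h * poly h 0 > 0" by simp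
  have "(-1) ^ degree f * poly f 0 = - ((-r0) * ((-1) ^ degree h * poly h 0))"
    using fh[of 0] dh ord1 by simp
  moreover have "(-r0) * ((-1) ^ degree h * poly h 0) > 0" using hp r0neg by (simp add: mult_neg_pos)
  ultimately show False using s0 by simp
qed

end

theorem propositionA3:
  fixes f :: "real poly"
  assumes deg: "degree f > 1"
    and lc: "lead_coeff f > 0"
    and dreal: "\<forall>z::complex. poly (map_poly complex_of_real (pderiv f)) z = 0 \<longrightarrow> z \<in> \<real>"
  shows "((\<forall>z::complex. poly (map_poly complex_of_real f) z = 0 \<longrightarrow> z \<in> \<real>)
            \<longleftrightarrow> SIGN f \<and> MULT f)
       \<and> ((\<forall>z::complex. poly (map_poly complex_of_real f) z = 0 \<longrightarrow> z \<in> \<real> \<and> Re z \<ge> 0)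
            \<longleftrightarrow> SIGN f \<and> MULT f \<and> (\<forall>x::real. poly (pderiv f) x = 0 \<longrightarrow> x \<ge> 0)
                \<and> (-1) ^ degree f * poly f 0 \<ge> 0)
       \<and> ((\<forall>z::complex. poly (map_poly complex_of_real f) z = 0 \<longrightarrow> z \<in> \<real> \<and> Re z > 0)
            \<longleftrightarrow> SIGN f \<and> MULT f \<and> (\<forall>x::real. poly (pderiv f) x = 0 \<longrightarrow> x > 0)
                \<and> (-1) ^ degree f * poly f 0 > 0)"
proof -
  interpret PA f using deg lc dreal by unfold_locales
  have A: "rr f \<longleftrightarrow> SIGN f \<and> MULT f" using rr_SIGN rr_MULT back_rr by blast
  have cplx: "(\<forall>z::complex. poly (map_poly complex_of_real f) z = 0 \<longrightarrow> z \<in> \<real> \<and> P (Re z))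
     \<longleftrightarrow> rr f \<and> (\<forall>x\<in>R. P x)" for P
  proof
    assume H: "\<forall>z::complex. poly (map_poly complex_of_real f) z = 0 \<longrightarrow> z \<in> \<real> \<and> P (Re z)"
    have "rr f" using H unfolding rr_def by blast
    moreover have "P x" if "x \<in> R" for x
    proof -
      have "poly (map_poly complex_of_real f) (of_real x) = 0" using that unfolding R_def by (simp add: mapc_poly)
      with H show ?thesis by force
    qed
    ultimately show "rr f \<and> (\<forall>x\<in>R. P x)" by blast
  next
    assume H: "rr f \<and> (\<forall>x\<in>R. P x)"
    show "\<forall>z::complex. poly (map_poly complex_of_real f) z = 0 \<longrightarrow> z \<in> \<real> \<and> P (Re z)"
    proof (intro allI impI)
      fix z :: complex assume z: "poly (map_poly complex_of_real f) z = 0"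
      then have "z \<in> \<real>" using H unfolding rr_def by blast
      then obtain x where zx: "z = of_real x" by (auto elim: Reals_cases)
      with z have "x \<in> R" unfolding R_def by (simp add: mapc_poly)
      with H zx \<open>z \<in> \<real>\<close> show "z \<in> \<real> \<and> P (Re z)" by simp
    qed
  qed
  have a: "(\<forall>z::complex. poly (map_poly complex_of_real f) z = 0 \<longrightarrow> z \<in> \<real>) \<longleftrightarrow> rr f"
    unfolding rr_def ..
  have b: "rr f \<and> (\<forall>x\<in>R. 0 \<le> x) \<longleftrightarrow>
      rr f \<and> (\<forall>x::real. poly (pderiv f) x = 0 \<longrightarrow> x \<ge> 0) \<and> (-1) ^ degree f * poly f 0 \<ge> 0"
  proof
    assume H: "rr f \<and> (\<forall>x\<in>R. 0 \<le> x)"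
    have "\<forall>x::real. poly (pderiv f) x = 0 \<longrightarrow> x \<ge> 0"
      using H rr_dbound by force
    moreover have "(-1) ^ degree f * poly f 0 \<ge> 0"
      using fwd_sign0 H by (cases "poly f 0 = 0") (auto intro: less_imp_le)
    ultimately show "rr f \<and> (\<forall>x::real. poly (pderiv f) x = 0 \<longrightarrow> x \<ge> 0) \<and> (-1) ^ degree f * poly f 0 \<ge> 0"
      using H by blast
  next
    assume H: "rr f \<and> (\<forall>x::real. poly (pderiv f) x = 0 \<longrightarrow> x \<ge> 0) \<and> (-1) ^ degree f * poly f 0 \<ge> 0"
    then show "rr f \<and> (\<forall>x\<in>R. 0 \<le> x)" using back_nonneg by blast
  qed
  have c: "rr f \<and> (\<forall>x\<in>R. 0 < x) \<longleftrightarrow>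
      rr f \<and> (\<forall>x::real. poly (pderiv f) x = 0 \<longrightarrow> x > 0) \<and> (-1) ^ degree f * poly f 0 > 0"
  proof
    assume H: "rr f \<and> (\<forall>x\<in>R. 0 < x)"
    have "\<forall>x::real. poly (pderiv f) x = 0 \<longrightarrow> x > 0"
      using H rr_dbound by force
    moreover have "poly f 0 \<noteq> 0" using H unfolding R_def by force
    then have "(-1) ^ degree f * poly f 0 > 0"
      using fwd_sign0 H by (auto intro: less_imp_le)
    ultimately show "rr f \<and> (\<forall>x::real. poly (pderiv f) x = 0 \<longrightarrow> x > 0) \<and> (-1) ^ degree f * poly f 0 > 0"
      using H by blast
  next
    assume H: "rr f \<and> (\<forall>x::real. poly (pderiv f) x = 0 \<longrightarrow> x > 0) \<and> (-1) ^ degree f * poly f 0 > 0"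
    then have "\<forall>x\<in>R. 0 \<le> x" using back_nonneg by (auto intro: less_imp_le)
    moreover have "0 \<notin> R" using H unfolding R_def by auto
    ultimately show "rr f \<and> (\<forall>x\<in>R. 0 < x)" using H by (metis order_le_less)
  qed
  show ?thesis
    using a b c A cplx[of "\<lambda>x. 0 \<le> x"] cplx[of "\<lambda>x. 0 < x"] by blast
qed

end
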